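(* Let $n=4k$ with $k\ge2$, let $\varrho$ be a primitive element of $\mathbb{F}_{2^n}$, let $\omega=\varrho^{(2^k-1)(2^{2k}+1)}$, and let $G(x)=\mathrm{Tr}^{4k}_k(\omega x^{2^k+1})$, with components $G_\lambda(x)=\mathrm{Tr}^k_1(\lambda G(x))=\mathrm{Tr}^n_1(\lambda\omega x^{2^k+1})$ for $\lambda\in\mathbb{F}_{2^k}^*$. Let $\lambda_0=(\omega+\omega^{2^k})^{-1}$. Then $\lambda_0\in\mathbb{F}_{2^k}^*$, $\mathrm{Tr}^k_1(\lambda_0)=1$, and $G_{\lambda_0}$ is a self-dual bent function. For any $\lambda\in\mathbb{F}_{2^k}^*$, letting $\delta$ be the unique element of $\mathbb{F}_{2^k}^*$ with $\delta^{2^k+1}=\lambda\lambda_0^{-1}$, one has $G_\lambda^*(x)=G_{\lambda_0}(\delta^{-1}x)$. In particular, for any $a,b\in\mathbb{F}_{2^{2k}}^*$ with $ab^{2^k}\in\mathbb{F}_{2^k}$, $D_aD_bG_\lambda^*=0$ for all $\lambda\in\mathbb{F}_{2^k}^*$ with $\mathrm{Tr}^k_1(\lambda)=1$.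
   Context: $\mathrm{Tr}^m_1(x)=\sum_{i=0}^{m-1}x^{2^i}$ and $\mathrm{Tr}^{4k}_k(x)=x+x^{2^k}+x^{2^{2k}}+x^{2^{3k}}$. For a bent Boolean function $f$ on $\mathbb{F}_{2^n}$ (i.e. $|W_f(a)|=2^{n/2}$ for all $a$, $W_f(a)=\sum_x(-1)^{f(x)+\mathrm{Tr}^n_1(ax)}$), the dual $f^*$ is defined by $W_f(a)=2^{n/2}(-1)^{f^*(a)}$; $f$ is self-dual if $f^*=f$. $D_aD_bf(x)=f(x)+f(x+a)+f(x+b)+f(x+a+b)$. *)

theory Defs
  imports Main
begin

text \<open>Finite field F_{2^n} is modelled as a finite field type 'a with CARD('a) = 2^n.
  Boolean functions take values in the prime subfield {0,1} of 'a.\<close>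

definition tr :: "nat \<Rightarrow> 'a::field \<Rightarrow> 'a" where
  "tr m x = (\<Sum>i<m. x ^ (2 ^ i))"

definition trk4 :: "nat \<Rightarrow> 'a::field \<Rightarrow> 'a" where
  "trk4 k x = x + x ^ (2 ^ k) + x ^ (2 ^ (2 * k)) + x ^ (2 ^ (3 * k))"

definition Fsub :: "nat \<Rightarrow> 'a::field set" where
  "Fsub m = {x. x ^ (2 ^ m) = x}"

definition primitive :: "'a::field \<Rightarrow> bool" where
  "primitive r \<longleftrightarrow> r \<noteq> 0 \<and> (\<forall>x. x \<noteq> 0 \<longrightarrow> (\<exists>i::nat. x = r ^ i))"

definition chi :: "'a::zero \<Rightarrow> int" where
  "chi y = (if y = 0 then 1 else -1)"

definition walsh :: "nat \<Rightarrow> ('a::{field,finite} \<Rightarrow> 'a) \<Rightarrow> 'a \<Rightarrow> int" where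
  "walsh n f a = (\<Sum>x\<in>UNIV. chi (f x + tr n (a * x)))"

definition bent :: "nat \<Rightarrow> ('a::{field,finite} \<Rightarrow> 'a) \<Rightarrow> bool" where
  "bent n f \<longleftrightarrow> (\<forall>a. \<bar>walsh n f a\<bar> = 2 ^ (n div 2))"

text \<open>Dual: W_f(a) = 2^{n/2} (-1)^{f*(a)} (meaningful for bent f).\<close>
definition dual :: "nat \<Rightarrow> ('a::{field,finite} \<Rightarrow> 'a) \<Rightarrow> 'a \<Rightarrow> 'a" where
  "dual n f a = (if walsh n f a = 2 ^ (n div 2) then 0 else 1)"

definition D2 :: "'a::field \<Rightarrow> 'a \<Rightarrow> ('a \<Rightarrow> 'a) \<Rightarrow> 'a \<Rightarrow> 'a" where
  "D2 a b f x = f x + f (x + a) + f (x + b) + f (x + a + b)"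

definition omega :: "nat \<Rightarrow> 'a::field \<Rightarrow> 'a" where
  "omega k r = r ^ ((2 ^ k - 1) * (2 ^ (2 * k) + 1))"

definition Gmap :: "nat \<Rightarrow> 'a::field \<Rightarrow> 'a \<Rightarrow> 'a" where
  "Gmap k r x = trk4 k (omega k r * x ^ (2 ^ k + 1))"

definition Gcomp :: "nat \<Rightarrow> 'a::field \<Rightarrow> 'a \<Rightarrow> 'a \<Rightarrow> 'a" where
  "Gcomp k r l x = tr k (l * Gmap k r x)"

definition lambda0 :: "nat \<Rightarrow> 'a::field \<Rightarrow> 'a" where
  "lambda0 k r = inverse (omega k r + omega k r ^ (2 ^ k))"

end

theory Submission
  imports Defs "HOL-Computational_Algebra.Polynomial"
begin


lemma tr_Suc: "tr (Suc m) x = tr m x + x ^ (2 ^ m)"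
  by (simp add: tr_def)

lemma tr_sq: "tr m (x^2) + x = tr m x + x ^ (2 ^ m)"
proof -
  have "tr (Suc m) x = x + tr m (x^2)"
    unfolding tr_def by (subst sum.lessThan_Suc_shift) (simp add: power_mult[symmetric] mult.commute)
  then show ?thesis using tr_Suc[of m x] by (simp add: algebra_simps)
qed


lemma tr_plus: "tr (a + b) z = tr a z + tr b (z ^ (2 ^ a))"
proof (induction b)
  case 0 then show ?case by (simp add: tr_def)
next
  case (Suc b)
  then show ?case by (simp add: tr_Suc power_mult[symmetric] power_add add.assoc)
qed

locale F4 =
  fixes k :: nat and \<rho> :: "'a::{field,finite}"
  assumes k2: "k \<ge> 2" and cardU: "card (UNIV :: 'a set) = 2 ^ (4 * k)" and prim: "primitive \<rho>"
begin

lemma ofnat_card: "(of_nat (card (UNIV::'a set)) :: 'a) = 0"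
proof -
  have "(\<Sum>y\<in>UNIV. (y::'a)) = (\<Sum>y\<in>UNIV. y + 1)"
    by (rule sum.reindex_bij_betw[symmetric]) (auto simp: bij_betw_def inj_on_def intro!: image_eqI[where x="_ - 1"])
  also have "\<dots> = (\<Sum>y\<in>UNIV. y) + of_nat (card (UNIV::'a set))"
    by (simp add: sum.distrib)
  finally show ?thesis by simp
qed

lemma two0: "(2::'a) = 0"
proof -
  have "(2::'a) ^ (4*k) = 0" using ofnat_card cardU by simp
  then show ?thesis by simp
qed

lemma xx[simp]: "(x::'a) + x = 0"
proof -
  have "x + x = 2 * x" by simp
  then show ?thesis using two0 by (metis mult_zero_left)
qed

lemma minus_eq[simp]: "- (x::'a) = x"
  using xx[of x] by (metis add.inverse_unique)

lemma diff_eq[simp]: "(x::'a) - y = x + y"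
  by (simp add: diff_conv_add_uminus)

lemma frob2: "((x::'a) + y)^2 = x^2 + y^2"
proof -
  have "(x+y)^2 = x^2 + y^2 + 2*x*y" by (simp add: power2_eq_square algebra_simps)
  then show ?thesis using two0 by simp
qed

lemma frob: "((x::'a) + y)^(2^i) = x^(2^i) + y^(2^i)"
proof (induction i)
  case 0 then show ?case by simp
next
  case (Suc i)
  have "(x+y)^(2^Suc i) = ((x+y)^(2^i))^2" by (simp add: power_mult[symmetric] mult.commute)
  also have "\<dots> = (x^(2^i))^2 + (y^(2^i))^2" using Suc frob2 by simp
  finally show ?case by (simp add: power_mult[symmetric] mult.commute)
qed

lemma tr_add: "tr m ((x::'a) + y) = tr m x + tr m y"
  by (simp add: tr_def frob sum.distrib)


lemma fermat: assumes "(x::'a) \<noteq> 0" shows "x ^ (2^(4*k) - 1) = 1"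
proof -
  let ?S = "UNIV - {0::'a}"
  have cS: "card ?S = 2^(4*k) - 1" using cardU by (simp add: card_Diff_singleton)
  have b: "bij_betw (\<lambda>y. x*y) ?S ?S"
    unfolding bij_betw_def
  proof
    show "inj_on (\<lambda>y. x*y) ?S" using assms by (simp add: inj_on_def)
    show "(\<lambda>y. x*y) ` ?S = ?S"
    proof
      show "(\<lambda>y. x*y) ` ?S \<subseteq> ?S" using assms by auto
      show "?S \<subseteq> (\<lambda>y. x*y) ` ?S"
      proof
        fix z assume "z \<in> ?S"
        then have "z = x * (inverse x * z)" "inverse x * z \<in> ?S" using assms by auto
        then show "z \<in> (\<lambda>y. x*y) ` ?S" by blast
      qed
    qed
  qed
  have "prod id ?S = prod (\<lambda>y. x*y) ?S"
    using prod.reindex_bij_betw[OF b, of id] by simp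
  also have "\<dots> = x ^ card ?S * prod id ?S" by (simp add: prod.distrib)
  finally have "x ^ card ?S * prod id ?S = 1 * prod id ?S" by simp
  moreover have "prod id ?S \<noteq> 0" by (simp add: prod_zero_iff)
  ultimately show ?thesis using cS by (metis mult_right_cancel)
qed

lemma xN: "(x::'a) ^ (2^(4*k)) = x"
proof (cases "x = 0")
  case True then show ?thesis by simp
next
  case False
  have "(2::nat)^(4*k) = (2^(4*k) - 1) + 1" by simp
  then have "x ^ (2^(4*k)) = x ^ (2^(4*k) - 1) * x" by (metis power_add power_one_right)
  then show ?thesis using fermat[OF False] by simp
qed

lemma order_ge: assumes "\<rho> ^ m = 1" "m > 0" shows "2^(4*k) - 1 \<le> m"
proof -
  have "UNIV - {0::'a} \<subseteq> (\<lambda>i. \<rho> ^ i) ` {..<m}"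
  proof
    fix x :: 'a assume "x \<in> UNIV - {0}"
    then obtain i where i: "x = \<rho> ^ i" using prim unfolding primitive_def by auto
    have "\<rho> ^ i = \<rho> ^ (m * (i div m) + i mod m)" by (metis div_mult_mod_eq mult.commute)
    also have "\<dots> = \<rho> ^ (i mod m)" by (simp only: power_add power_mult assms(1) power_one mult_1)
    finally show "x \<in> (\<lambda>i. \<rho> ^ i) ` {..<m}" using i assms(2) by auto
  qed
  then have "card (UNIV - {0::'a}) \<le> card ((\<lambda>i. \<rho> ^ i) ` {..<m})" by (intro card_mono) auto
  also have "\<dots> \<le> m" using card_image_le[of "{..<m}"] by simp
  finally show ?thesis using cardU by (simp add: card_Diff_singleton)
qed

lemma rhoN: "\<rho> ^ (2^(4*k) - 1) = 1"
  using fermat prim unfolding primitive_def by auto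

lemma tr4_sq: "tr (4*k) ((y::'a)^2) = tr (4*k) y"
  using tr_sq[of "4*k" y] xN[of y] by (metis add_right_cancel)

lemma tr4_pow: "tr (4*k) ((y::'a)^(2^i)) = tr (4*k) y"
proof (induction i)
  case 0 then show ?case by simp
next
  case (Suc i)
  have "y ^ (2 ^ Suc i) = (y^(2^i))^2" by (simp add: power_mult[symmetric] mult.commute)
  then show ?case using Suc tr4_sq by simp
qed

lemma tr_sq_sum: "(tr m (y::'a))^2 = tr m (y^2)"
proof -
  have "(tr m y)^2 = (\<Sum>i<m. (y^(2^i))^2)"
    unfolding tr_def by (induction m) (simp_all add: frob2)
  then show ?thesis unfolding tr_def by (simp add: power_mult[symmetric] mult.commute)
qed

lemma tr4_idem: "(tr (4*k) (y::'a))^2 = tr (4*k) y"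
  using tr_sq_sum tr4_sq by simp

lemma idem01: "(t::'a)^2 = t \<Longrightarrow> t = 0 \<or> t = 1"
  by (metis (no_types, lifting) eq_iff_diff_eq_0 mult_eq_0_iff power2_eq_square right_diff_distrib' mult.right_neutral)


lemma pow2_add: "(x::'a) ^ (2 ^ (a + b)) = (x ^ (2 ^ a)) ^ (2 ^ b)"
  by (simp add: power_add power_mult)

lemma Fsub_iter: assumes "x \<in> Fsub m" shows "(x::'a) ^ (2 ^ (m * j)) = x"
proof (induction j)
  case 0 then show ?case by simp
next
  case (Suc j)
  have "x ^ (2 ^ (m * Suc j)) = (x ^ (2 ^ (m*j))) ^ (2 ^ m)"
    by (metis pow2_add mult_Suc_right add.commute)
  then show ?case using Suc assms by (simp add: Fsub_def)
qed

lemma Fsub_add: "x \<in> Fsub m \<Longrightarrow> y \<in> Fsub m \<Longrightarrow> (x::'a) + y \<in> Fsub m"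
  by (simp add: Fsub_def frob)
lemma Fsub_mult: "x \<in> Fsub m \<Longrightarrow> y \<in> Fsub m \<Longrightarrow> (x::'a) * y \<in> Fsub m"
  by (simp add: Fsub_def power_mult_distrib)
lemma Fsub_inverse: "x \<in> Fsub m \<Longrightarrow> inverse (x::'a) \<in> Fsub m"
  by (simp add: Fsub_def power_inverse)
lemma Fsub_0: "(0::'a) \<in> Fsub m" by (simp add: Fsub_def)
lemma Fsub_1: "(1::'a) \<in> Fsub m" by (simp add: Fsub_def)
lemma Fsub_pow: "x \<in> Fsub m \<Longrightarrow> (x::'a) ^ j \<in> Fsub m"
proof -
  assume "x \<in> Fsub m"
  then have h: "x ^ (2^m) = x" by (simp add: Fsub_def)
  have "(x ^ j) ^ (2^m) = (x ^ (2^m)) ^ j" by (simp only: power_mult[symmetric] mult.commute)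
  then show ?thesis using h by (simp add: Fsub_def)
qed
lemma Fsub_frob: "x \<in> Fsub m \<Longrightarrow> (x::'a) ^ (2^j) \<in> Fsub m"
  by (rule Fsub_pow)
lemma Fsub_sub: "x \<in> Fsub m \<Longrightarrow> (x::'a) \<in> Fsub (m * j)"
  using Fsub_iter by (simp add: Fsub_def)
lemma Fsub_all: "(x::'a) \<in> Fsub (4*k)"
  using xN by (simp add: Fsub_def)

lemma nat_sq1: "(a::nat) \<ge> 1 \<Longrightarrow> (a + 1) * (a - 1) = a * a - 1"
  by (cases a) (simp_all add: algebra_simps)

lemma N_eq: "(2::nat)^(4*k) = 2^(2*k) * 2^(2*k)"
  by (simp add: power_add[symmetric])

lemma N1_eq: "(2::nat)^(4*k) - 1 = (2^(2*k) + 1) * (2^(2*k) - 1)"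
  using N_eq nat_sq1[of "2^(2*k)"] by simp

lemma card_E: "card (Fsub (2*k) :: 'a set) = 2^(2*k)"
proof (rule antisym)
  let ?n = "(2::nat)^(2*k)"
  let ?p = "monom (1::'a) ?n - [:0,1:]"
  have "(2::nat)^1 \<le> 2^(2*k)" by (rule power_increasing) (use k2 in auto)
  then have n2: "?n \<ge> 2" by simp
  have c1: "coeff [:0,1::'a:] ?n = 0" using n2 by (intro coeff_eq_0) simp
  have cp: "coeff ?p ?n = 1" by (simp only: coeff_diff c1 coeff_monom) simp
  then have p0: "?p \<noteq> 0" by (metis coeff_0 one_neq_zero)
  have "degree [:0,1::'a:] \<le> ?n" using n2 by simp
  then have deg: "degree ?p \<le> ?n" by (intro degree_diff_le degree_monom_le)
  have sub: "Fsub (2*k) \<subseteq> {x. poly ?p x = 0}"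
  proof
    fix x :: 'a assume "x \<in> Fsub (2*k)"
    then have "x ^ ?n = x" by (simp add: Fsub_def)
    then show "x \<in> {x. poly ?p x = 0}" by (simp only: mem_Collect_eq poly_diff poly_monom) simp
  qed
  have "card (Fsub (2*k) :: 'a set) \<le> card {x. poly ?p x = 0}"
    by (rule card_mono[OF poly_roots_finite[OF p0] sub])
  then show "card (Fsub (2*k) :: 'a set) \<le> ?n"
    using card_poly_roots_bound[OF p0] deg by linarith
next
  let ?n = "(2::nat)^(2*k)"
  let ?f = "\<lambda>i. \<rho> ^ ((?n + 1) * i)"
  have r0: "\<rho> \<noteq> 0" using prim by (simp add: primitive_def)
  have inj: "inj_on ?f {..<?n - 1}"
  proof (rule linorder_inj_onI')
    fix i j assume ij: "i \<in> {..<?n - 1}" "j \<in> {..<?n - 1}" "i < j"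
    show "?f i \<noteq> ?f j"
    proof
      assume eq: "?f i = ?f j"
      have "j = i + (j - i)" using ij by simp
      then have "(?n+1)*j = (?n+1)*i + (?n+1)*(j-i)" by (metis distrib_left)
      then have "?f j = ?f i * \<rho> ^ ((?n+1)*(j-i))" by (simp add: power_add)
      then have 1: "\<rho> ^ ((?n+1)*(j-i)) = 1" using eq r0 by simp
      have "j - i < ?n - 1" using ij by auto
      then have "(?n+1)*(j-i) < (?n+1)*(?n-1)" by (intro mult_strict_left_mono) auto
      then have "(?n+1)*(j-i) < 2^(4*k) - 1" using N1_eq by simp
      moreover have "(?n+1)*(j-i) > 0" using ij by simp
      ultimately show False using order_ge[OF 1] by simp
    qed
  qed
  have sub: "?f ` {..<?n - 1} \<subseteq> Fsub (2*k) - {0}"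
  proof
    fix x assume "x \<in> ?f ` {..<?n - 1}"
    then obtain i where x: "x = ?f i" by auto
    have "(?n+1)*i*(?n-1) = ((?n+1)*(?n-1))*i" by (metis mult.commute mult.assoc)
    then have e: "(?n+1)*i*(?n-1) = (2^(4*k)-1)*i" by (simp only: N1_eq)
    have "x ^ (?n - 1) = \<rho> ^ ((?n+1)*i*(?n-1))" using x by (metis power_mult)
    also have "\<dots> = (\<rho> ^ (2^(4*k) - 1)) ^ i" unfolding e by (metis power_mult)
    finally have "x ^ (?n - 1) = (\<rho> ^ (2^(4*k) - 1)) ^ i" .
    then have x1: "x ^ (?n - 1) = 1" using rhoN by simp
    have "?n = Suc (?n - 1)" by simp
    then have "x ^ ?n = x ^ (?n - 1) * x" by (metis power_Suc2)
    then have "x ^ ?n = x" using x1 by simp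
    then show "x \<in> Fsub (2*k) - {0}" using x r0 by (simp add: Fsub_def)
  qed
  have "?n - 1 \<le> card (Fsub (2*k) - {0::'a})"
    using card_mono[OF _ sub] card_image[OF inj] by simp
  moreover have "card (Fsub (2*k) :: 'a set) = card (Fsub (2*k) - {0::'a}) + 1"
  proof -
    have "card (Fsub (2*k) :: 'a set) > 0" using Fsub_0 by (auto simp: card_gt_0_iff)
    then show ?thesis using Fsub_0 by (simp add: card_Diff_singleton)
  qed
  ultimately show "?n \<le> card (Fsub (2*k) :: 'a set)" by simp
qed

lemma tr_nonzero: "\<exists>u \<in> Fsub (2*k). tr (2*k) (u::'a) \<noteq> 0"
proof (rule ccontr)
  assume "\<not> ?thesis"
  then have all: "\<forall>u \<in> Fsub (2*k). tr (2*k) (u::'a) = 0" by auto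
  let ?m = "2*k"
  let ?p = "(\<Sum>i<?m. monom (1::'a) (2^i))"
  have m1: "?m \<ge> 1" using k2 by simp
  have "coeff ?p 1 = (\<Sum>i<?m. if i = 0 then 1 else 0)"
    unfolding coeff_sum by (intro sum.cong) (auto simp: coeff_monom)
  also have "\<dots> = 1" using m1 by simp
  finally have p0: "?p \<noteq> 0" by auto
  have "degree ?p \<le> 2^(?m - 1)"
    by (intro degree_sum_le) (auto intro!: order_trans[OF degree_monom_le] power_increasing)
  moreover have "2^(?m - 1) < (2::nat)^?m" using m1 by simp
  moreover have "Fsub (2*k) \<subseteq> {x. poly ?p x = 0}"
    using all by (auto simp: poly_sum poly_monom tr_def)
  ultimately have "card (Fsub (2*k) :: 'a set) < 2^?m"
    using card_poly_roots_bound[OF p0] card_mono[OF poly_roots_finite[OF p0]] by (meson le_less_trans order_trans)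
  then show False using card_E by simp
qed

end



context F4 begin

lemma tr_split4: "tr (4*k) (z::'a) = tr k (trk4 k z)"
proof -
  have a: "4*k = k + (k + (k + k))" by simp
  have "tr (4*k) z = tr k z + (tr k (z^(2^k)) + (tr k ((z^(2^k))^(2^k)) + tr k (((z^(2^k))^(2^k))^(2^k))))"
    unfolding a tr_plus ..
  also have "(z^(2^k))^(2^k) = z^(2^(2*k))" by (simp add: pow2_add[symmetric] mult_2)
  also have "(z^(2^(2*k)))^(2^k) = z^(2^(3*k))"
  proof -
    have "2*k + k = 3*k" by simp
    then show ?thesis by (simp only: pow2_add[symmetric])
  qed
  finally show ?thesis by (simp only: trk4_def tr_add add.assoc)
qed

lemma trk4_scal: assumes "l \<in> Fsub k" shows "trk4 k (l * (y::'a)) = l * trk4 k y"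
proof -
  have a: "l^(2^(2*k)) = l" using Fsub_iter[OF assms, of 2] by (simp only: mult.commute)
  have b: "l^(2^(3*k)) = l" using Fsub_iter[OF assms, of 3] by (simp only: mult.commute)
  have c: "l^(2^k) = l" using assms by (simp add: Fsub_def)
  show ?thesis unfolding trk4_def power_mult_distrib a b c by (simp only: distrib_left)
qed

lemma part1: assumes "l \<in> Fsub k" shows "Gcomp k \<rho> l x = tr (4*k) (l * omega k \<rho> * x ^ (2^k+1))"
  unfolding Gcomp_def Gmap_def trk4_scal[OF assms, symmetric] tr_split4 by (simp add: mult.assoc)

lemma nat_aux1: "(n::nat) \<ge> 1 \<Longrightarrow> a*(n+1)*n = a*((n+1)*(n-1)) + a*(n+1)"
  by (cases n) (simp_all add: algebra_simps)

lemma q_ge: "(2::nat)^k \<ge> 4"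
proof -
  have "(2::nat)^2 \<le> 2^k" by (rule power_increasing) (use k2 in auto)
  then show ?thesis by simp
qed

lemma qq: "(2::nat)^k * 2^k = 2^(2*k)" by (simp add: power_add[symmetric] mult_2)

lemma om_q2: "omega k \<rho> ^ (2^(2*k)) = omega k \<rho>"
proof -
  let ?q = "(2::nat)^k" let ?n = "(2::nat)^(2*k)"
  let ?e = "(?q - 1) * (?n + 1)"
  have n1: "?n \<ge> 1" by simp
  have "?e * ?n = (?q - 1) * ((?n+1)*(?n-1)) + ?e" using nat_aux1[OF n1, of "?q - 1"] by simp
  also have "\<dots> = (2^(4*k) - 1) * (?q - 1) + ?e" unfolding N1_eq by (simp only: mult.commute)
  finally have ee: "?e * ?n = (2^(4*k) - 1) * (?q - 1) + ?e" .
  have "omega k \<rho> ^ ?n = \<rho> ^ (?e * ?n)" unfolding omega_def by (simp add: power_mult)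
  also have "\<dots> = (\<rho> ^ (2^(4*k) - 1)) ^ (?q - 1) * \<rho> ^ ?e" unfolding ee by (simp only: power_add power_mult)
  also have "\<dots> = omega k \<rho>" unfolding omega_def by (simp only: rhoN power_one mult_1)
  finally show ?thesis .
qed

lemma om_q1: "omega k \<rho> ^ (2^k + 1) = 1"
proof -
  let ?q = "(2::nat)^k" let ?n = "(2::nat)^(2*k)"
  have "(?q + 1) * (?q - 1) = ?n - 1" using nat_sq1[of ?q] qq by simp
  then have "(?q - 1) * (?n + 1) * (?q + 1) = 2^(4*k) - 1" using N1_eq by (metis mult.commute mult.assoc)
  then have ex: "(?q - 1) * (?n + 1) * (?q + 1) = 2^(4*k) - 1" .
  have "omega k \<rho> ^ (?q + 1) = \<rho> ^ ((?q - 1) * (?n + 1) * (?q + 1))"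
    unfolding omega_def by (rule power_mult[symmetric])
  then show ?thesis unfolding ex rhoN .
qed

lemma om_ne: "omega k \<rho> ^ (2^k) \<noteq> omega k \<rho>"
proof
  let ?q = "(2::nat)^k" let ?n = "(2::nat)^(2*k)"
  let ?e = "(?q - 1) * (?n + 1)"
  assume eq: "omega k \<rho> ^ ?q = omega k \<rho>"
  have r0: "\<rho> \<noteq> 0" using prim by (simp add: primitive_def)
  have "?q = (?q - 1) + 1" by simp
  then have "?e * ?q = ?e * (?q - 1) + ?e" by (metis add_mult_distrib2 mult_1_right)
  then have "omega k \<rho> ^ ?q = \<rho> ^ (?e * (?q - 1)) * omega k \<rho>"
    unfolding omega_def by (simp add: power_mult[symmetric] power_add)
  then have 1: "\<rho> ^ (?e * (?q - 1)) = 1" using eq r0 by (simp add: omega_def)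
  have q4: "?q \<ge> 4" by (rule q_ge)
  have pos: "?e * (?q - 1) > 0" using q4 by simp
  have "?e * (?q - 1) < ?e * (?q + 1)" using q4 by (intro mult_strict_left_mono) auto
  also have "?e * (?q + 1) = (?n + 1) * ((?q+1)*(?q-1))" by (simp only: ac_simps)
  also have "(?q + 1) * (?q - 1) = ?n - 1" using nat_sq1[of ?q] qq by simp
  also have "(?n + 1) * (?n - 1) = 2^(4*k) - 1" using N1_eq by (rule sym)
  finally have "?e * (?q - 1) < 2^(4*k) - 1" .
  then show False using order_ge[OF 1 pos] by linarith
qed

lemma add0_eq: "(x::'a) + y = 0 \<Longrightarrow> x = y"
  by (metis add.inverse_unique minus_eq)

lemma s_ne: "omega k \<rho> + omega k \<rho> ^ (2^k) \<noteq> 0"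
  using om_ne add0_eq by metis

lemma s_Fk: "omega k \<rho> + omega k \<rho> ^ (2^k) \<in> Fsub k"
proof -
  have "(omega k \<rho> ^ (2^k)) ^ (2^k) = omega k \<rho>"
    using om_q2 by (simp add: pow2_add[symmetric] mult_2)
  then show ?thesis by (simp add: Fsub_def frob add.commute)
qed

lemma l0_F: "lambda0 k \<rho> \<in> Fsub k - {0}"
  unfolding lambda0_def using s_ne s_Fk Fsub_inverse by auto

lemma tr_YY: "tr m ((Y::'a)^2 + Y) = Y^(2^m) + Y"
proof -
  have h: "tr m (Y^2) + Y = tr m Y + Y ^ (2^m)" by (rule tr_sq)
  have "tr m (Y^2) = (tr m (Y^2) + Y) + Y" by (simp add: add.assoc)
  also have "\<dots> = tr m Y + Y ^ (2^m) + Y" by (simp only: h)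
  finally have h2: "tr m (Y^2) = tr m Y + Y ^ (2^m) + Y" .
  have "tr m (Y^2 + Y) = tr m Y + Y ^ (2^m) + Y + tr m Y" by (simp only: tr_add h2)
  also have "\<dots> = (tr m Y + tr m Y) + (Y ^ (2^m) + Y)" by (simp only: add.assoc add.commute add.left_commute)
  finally show ?thesis by simp
qed

lemma l0_tr: "tr k (lambda0 k \<rho>) = 1"
proof -
  let ?w = "omega k \<rho>" let ?s = "?w + ?w^(2^k)" let ?l = "lambda0 k \<rho>"
  have ls: "?l * ?s = 1" using s_ne by (simp add: lambda0_def)
  have lq: "?l ^ (2^k) = ?l" using l0_F by (simp add: Fsub_def)
  define Y where "Y = ?w * ?l"
  have wq: "?w ^ (2^k+1) = ?w * ?w^(2^k)" by simp
  have Yeq: "Y = ?l^2 * (?w * ?s)"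
  proof -
    have "Y = Y * (?l * ?s)" using ls by simp
    also have "\<dots> = ?l^2 * (?w * ?s)" by (simp add: Y_def power2_eq_square ac_simps)
    finally show ?thesis .
  qed
  have Y2a: "Y^2 = ?l^2 * ?w^2" by (simp add: Y_def power_mult_distrib mult.commute)
  have "Y^2 + Y = ?l^2 * ?w^2 + Y" by (simp only: Y2a)
  also have "\<dots> = ?l^2 * ?w^2 + ?l^2 * (?w * ?s)" by (subst Yeq) (rule refl)
  also have "\<dots> = ?l^2 * (?w^2 + ?w * ?s)" by (simp only: distrib_left)
  finally have "Y^2 + Y = ?l^2 * (?w^2 + ?w * ?s)" .
  also have "?w^2 + ?w * ?s = 1" using om_q1 wq by (simp add: power2_eq_square algebra_simps)
  finally have Y2: "Y^2 + Y = ?l^2" by simp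
  have "Y^(2^k) + Y = (?w^(2^k) + ?w) * ?l" using lq by (simp add: Y_def power_mult_distrib algebra_simps)
  also have "\<dots> = 1" using ls by (simp add: add.commute mult.commute)
  finally have "tr k (?l^2) = 1" using tr_YY[of k Y] Y2 by simp
  moreover have "tr k (?l^2) = tr k ?l" using tr_sq[of k ?l] lq by simp
  ultimately have t1: "tr k ?l = 1" by simp
  then show ?thesis .
qed

end



context F4 begin

abbreviation "cc \<equiv> lambda0 k \<rho> * omega k \<rho>"
abbreviation "EE \<equiv> (Fsub (2*k) :: 'a set)"

lemma pq: "(y::'a) ^ (2^k + 1) = y ^ (2^k) * y"
  by (simp add: power_add)

lemma E_q3: "v \<in> EE \<Longrightarrow> v ^ (2^(3*k)) = v ^ (2^k)"
proof -
  assume "v \<in> EE"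
  then have h: "v ^ (2^(2*k)) = v" by (simp add: Fsub_def)
  have "3*k = 2*k + k" by simp
  then have "v ^ (2^(3*k)) = (v ^ (2^(2*k))) ^ (2^k)" by (simp only: pow2_add)
  then show ?thesis using h by simp
qed

lemma q_q3: "((x::'a) ^ (2^k)) ^ (2^(3*k)) = x"
proof -
  have "k + 3*k = 4*k" by simp
  then have "(x ^ (2^k)) ^ (2^(3*k)) = x ^ (2^(4*k))" by (simp only: pow2_add[symmetric])
  then show ?thesis using xN by simp
qed

lemma Fk_E: "x \<in> Fsub k \<Longrightarrow> (x::'a) \<in> EE"
  using Fsub_sub[of x k 2] by (simp add: mult.commute)

lemma om_E: "omega k \<rho> \<in> EE"
  using om_q2 by (simp add: Fsub_def)

lemma cc_E: "cc \<in> EE"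
  using Fsub_mult[OF Fk_E om_E] l0_F by auto

lemma cc_sum: "cc + cc ^ (2^k) = 1"
proof -
  have lq: "lambda0 k \<rho> ^ (2^k) = lambda0 k \<rho>" using l0_F by (simp add: Fsub_def)
  have "cc + cc ^ (2^k) = lambda0 k \<rho> * (omega k \<rho> + omega k \<rho> ^ (2^k))"
    by (simp add: power_mult_distrib lq distrib_left)
  also have "\<dots> = 1" using s_ne by (simp add: lambda0_def)
  finally show ?thesis .
qed

lemma cc_q: "cc ^ (2^k) + 1 = cc"
proof -
  have "cc ^ (2^k) + 1 = cc ^ (2^k) + (cc + cc ^ (2^k))" by (simp only: cc_sum)
  also have "\<dots> = cc + (cc ^ (2^k) + cc ^ (2^k))" by (simp only: add.assoc add.commute add.left_commute)
  finally show ?thesis by simp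
qed

lemma tr4_E: "e \<in> EE \<Longrightarrow> tr (4*k) e = 0"
proof -
  assume "e \<in> EE"
  then have h: "e ^ (2^(2*k)) = e" by (simp add: Fsub_def)
  have "4*k = 2*k + 2*k" by simp
  then have "tr (4*k) e = tr (2*k) e + tr (2*k) (e ^ (2^(2*k)))" by (simp only: tr_plus)
  then show ?thesis using h by simp
qed

lemma tr4_q3: "tr (4*k) ((y::'a) ^ (2^(3*k))) = tr (4*k) y"
  by (rule tr4_pow)

lemma pow3_aux: assumes "c \<in> EE" "v \<in> EE"
  shows "(c * (x::'a)^(2^k) * v) ^ (2^(3*k)) = c ^ (2^k) * x * v ^ (2^k)"
  by (simp only: power_mult_distrib E_q3[OF assms(1)] E_q3[OF assms(2)] q_q3)

definition QQ :: "'a \<Rightarrow> 'a" where "QQ x = tr (4*k) (cc * x ^ (2^k + 1))"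

lemma QQ_shift: assumes v: "v \<in> EE" shows "QQ (x + v) = QQ x + tr (4*k) (x * v ^ (2^k))"
proof -
  let ?q = "2^k" let ?t = "tr (4*k)"
  have "(x+v)^(?q+1) = (x^?q + v^?q) * (x + v)" by (simp only: pq frob)
  then have "cc * (x+v)^(?q+1) = cc * x^(?q+1) + cc * x^?q * v + cc * v^?q * x + cc * v^(?q+1)"
    by (simp add: pq algebra_simps)
  then have e1: "QQ (x+v) = QQ x + ?t (cc * x^?q * v) + ?t (cc * v^?q * x) + ?t (cc * v^(?q+1))"
    by (simp add: QQ_def tr_add)
  have "cc * v^(?q+1) \<in> EE" by (rule Fsub_mult[OF cc_E Fsub_pow[OF v]])
  then have z: "?t (cc * v^(?q+1)) = 0" by (rule tr4_E)
  have "?t (cc * x^?q * v) = ?t ((cc * x^?q * v) ^ (2^(3*k)))" by (rule tr4_q3[symmetric])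
  also have "(cc * x^?q * v) ^ (2^(3*k)) = cc ^ ?q * x * v ^ ?q"
    by (rule pow3_aux[OF cc_E v])
  finally have e2: "?t (cc * x^?q * v) = ?t (cc ^ ?q * x * v ^ ?q)" .
  have "QQ (x+v) = QQ x + (?t (cc ^ ?q * x * v ^ ?q) + ?t (cc * v^?q * x))" using e1 e2 z by (simp add: add.assoc)
  also have "?t (cc ^ ?q * x * v ^ ?q) + ?t (cc * v^?q * x) = ?t ((cc + cc ^ ?q) * (x * v ^ ?q))"
    by (simp add: tr_add[symmetric] algebra_simps)
  finally show ?thesis by (simp add: cc_sum)
qed

definition hh :: "'a \<Rightarrow> 'a \<Rightarrow> 'a" where "hh a x = QQ x + tr (4*k) (a * x)"

lemma hh_shift: assumes v: "v \<in> EE" shows "hh a (x + v) = hh a x + tr (4*k) ((x + a ^ (2^k)) * v ^ (2^k))"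
proof -
  have "tr (4*k) (a * v) = tr (4*k) ((a * v) ^ (2^k))" by (rule tr4_pow[symmetric])
  then have "tr (4*k) (a * v) = tr (4*k) (a ^ (2^k) * v ^ (2^k))" by (simp add: power_mult_distrib)
  then show ?thesis unfolding hh_def QQ_shift[OF v]
    by (simp add: distrib_left distrib_right tr_add ac_simps)
qed

end



context F4 begin

lemma chi0: "chi (0::'a) = 1" by (simp add: chi_def)
lemma chi1: "chi (1::'a) = -1" by (simp add: chi_def)

lemma chi_add: assumes "(s::'a)^2 = s" "t^2 = t" shows "chi (s + t) = chi s * chi t"
proof -
  have "s = 0 \<or> s = 1" "t = 0 \<or> t = 1" using idem01 assms by auto
  then show ?thesis by (auto simp: chi0 chi1)
qed

lemma idem_add: "(s::'a)^2 = s \<Longrightarrow> t^2 = t \<Longrightarrow> (s+t)^2 = s+t"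
  by (simp add: frob2)

lemma QQ_idem: "(QQ x)^2 = QQ x" unfolding QQ_def by (rule tr4_idem)
lemma hh_idem: "(hh a x)^2 = hh a x" unfolding hh_def by (intro idem_add QQ_idem tr4_idem)

lemma E_add: "x \<in> EE \<Longrightarrow> y \<in> EE \<Longrightarrow> x + y \<in> EE" by (rule Fsub_add)

lemma nondeg: assumes w: "w \<notin> EE" shows "\<exists>v0 \<in> EE. tr (4*k) (w * v0 ^ (2^k)) \<noteq> 0"
proof -
  let ?z = "w + w ^ (2^(2*k))"
  have z0: "?z \<noteq> 0"
  proof
    assume "?z = 0"
    then have "w = w ^ (2^(2*k))" by (rule add0_eq)
    then have "w \<in> EE" by (simp add: Fsub_def)
    then show False using w by simp
  qed
  have "2*k + 2*k = 4*k" by simp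
  then have w4: "(w ^ (2^(2*k))) ^ (2^(2*k)) = w" using xN by (simp only: pow2_add[symmetric])
  have zE: "?z \<in> EE" unfolding Fsub_def using w4 by (simp add: frob add.commute)
  obtain u' where u': "u' \<in> EE" "tr (2*k) u' \<noteq> 0" using tr_nonzero by auto
  define u where "u = u' * inverse ?z"
  have uE: "u \<in> EE" unfolding u_def by (intro Fsub_mult Fsub_inverse u' zE)
  define v0 where "v0 = u ^ (2^(3*k))"
  have v0E: "v0 \<in> EE" unfolding v0_def by (rule Fsub_pow[OF uE])
  have "3*k + k = 4*k" by simp
  then have v0q: "v0 ^ (2^k) = u" unfolding v0_def using xN by (simp only: pow2_add[symmetric])
  have uq: "u ^ (2^(2*k)) = u" using uE by (simp add: Fsub_def)
  have "4*k = 2*k + 2*k" by simp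
  then have "tr (4*k) (w * u) = tr (2*k) (w * u) + tr (2*k) ((w * u) ^ (2^(2*k)))" by (simp only: tr_plus)
  also have "\<dots> = tr (2*k) (?z * u)" by (simp add: power_mult_distrib uq tr_add[symmetric] distrib_right)
  also have "?z * u = u'" using z0 by (simp add: u_def)
  finally have "tr (4*k) (w * u) = tr (2*k) u'" .
  then have "tr (4*k) (w * v0 ^ (2^k)) \<noteq> 0" using v0q u'(2) by simp
  then show ?thesis using v0E by blast
qed

lemma charsum: "(\<Sum>v\<in>EE. chi (tr (4*k) (w * v ^ (2^k)))) = (if w \<in> EE then int (card EE) else 0)"
proof (cases "w \<in> EE")
  case True
  have "\<And>v. v \<in> EE \<Longrightarrow> tr (4*k) (w * v ^ (2^k)) = 0"
    by (intro tr4_E Fsub_mult True Fsub_pow)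
  then show ?thesis using True by (simp add: chi0)
next
  case False
  obtain v0 where v0: "v0 \<in> EE" "tr (4*k) (w * v0 ^ (2^k)) \<noteq> 0" using nondeg[OF False] by auto
  have t1: "tr (4*k) (w * v0 ^ (2^k)) = 1" using v0(2) idem01 tr4_idem by blast
  let ?S = "(\<Sum>v\<in>EE. chi (tr (4*k) (w * v ^ (2^k))))"
  have b: "bij_betw (\<lambda>v. v + v0) EE EE"
    unfolding bij_betw_def
  proof
    show "inj_on (\<lambda>v. v + v0) EE" by (simp add: inj_on_def)
    show "(\<lambda>v. v + v0) ` EE = EE"
    proof
      show "(\<lambda>v. v + v0) ` EE \<subseteq> EE" using v0(1) E_add by auto
      show "EE \<subseteq> (\<lambda>v. v + v0) ` EE"
      proof
        fix u assume u: "u \<in> EE"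
        have "u = (u + v0) + v0" by (simp add: add.assoc)
        moreover have "u + v0 \<in> EE" using u v0(1) E_add by auto
        ultimately show "u \<in> (\<lambda>v. v + v0) ` EE" by blast
      qed
    qed
  qed
  have "?S = (\<Sum>v\<in>EE. chi (tr (4*k) (w * (v + v0) ^ (2^k))))"
    using sum.reindex_bij_betw[OF b, of "\<lambda>v. chi (tr (4*k) (w * v ^ (2^k)))"] by simp
  also have "\<dots> = (\<Sum>v\<in>EE. chi (tr (4*k) (w * v ^ (2^k))) * chi (tr (4*k) (w * v0 ^ (2^k))))"
    by (intro sum.cong refl) (simp add: frob distrib_left tr_add chi_add tr4_idem)
  also have "\<dots> = - ?S" by (simp add: t1 chi1 sum_negf)
  finally have "?S = 0" by simp
  then show ?thesis using False by simp
qed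

lemma pmd3: "((c::'a) * x * y) ^ n = c ^ n * x ^ n * y ^ n"
  by (simp only: power_mult_distrib)

lemma hh_aq: "hh a (a ^ (2^k)) = QQ a"
proof -
  let ?q = "2^k" let ?t = "tr (4*k)"
  have aq: "(a^?q)^(?q+1) = a^(2^(2*k)) * a^?q"
  proof -
    have "k + k = 2*k" by simp
    then have "(a^?q)^?q = a^(2^(2*k))" by (simp only: pow2_add[symmetric])
    then show ?thesis by (simp only: pq)
  qed
  have "QQ (a^?q) = ?t (cc * (a^(2^(2*k)) * a^?q))" by (simp only: QQ_def aq)
  then have "QQ (a^?q) = ?t (cc * a^(2^(2*k)) * a^?q)" by (simp only: mult.assoc)
  also have "\<dots> = ?t ((cc * a^(2^(2*k)) * a^?q) ^ (2^(3*k)))" by (rule tr4_q3[symmetric])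
  also have "(cc * a^(2^(2*k)) * a^?q) ^ (2^(3*k)) = cc ^ ?q * a ^ ?q * a"
  proof -
    have "2*k + 3*k = 4*k + k" by simp
    then have "(a^(2^(2*k)))^(2^(3*k)) = (a^(2^(4*k)))^(2^k)" by (simp only: pow2_add[symmetric])
    then have 1: "(a^(2^(2*k)))^(2^(3*k)) = a ^ ?q" using xN by simp
    have 2: "(a^?q)^(2^(3*k)) = a" by (rule q_q3)
    have 3: "cc ^ (2^(3*k)) = cc ^ ?q" by (rule E_q3[OF cc_E])
    have "(cc * a^(2^(2*k)) * a^?q) ^ (2^(3*k)) = cc ^ (2^(3*k)) * (a^(2^(2*k)))^(2^(3*k)) * (a^?q)^(2^(3*k))"
      by (rule pmd3)
    then show ?thesis using 1 2 3 by simp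
  qed
  finally have e: "QQ (a^?q) = ?t (cc ^ ?q * a ^ ?q * a)" .
  have "hh a (a^?q) = ?t (cc ^ ?q * a ^ ?q * a) + ?t (a ^ ?q * a)" unfolding hh_def e by (simp add: mult.commute)
  also have "\<dots> = ?t ((cc ^ ?q + 1) * (a ^ ?q * a))" by (simp add: tr_add[symmetric] algebra_simps)
  also have "\<dots> = QQ a" unfolding cc_q QQ_def pq by simp
  finally show ?thesis .
qed

end



context F4 begin

lemma tr_0: "tr m (0::'a) = 0" by (simp add: tr_def power_0_left)

lemma cardE_pos: "card EE > 0"
  using card_E by simp

lemma shift_set: "card {x. x + b \<in> EE} = card EE"
proof -
  have "{x. x + b \<in> EE} = (\<lambda>e. e + b) ` EE"
  proof
    show "{x. x + b \<in> EE} \<subseteq> (\<lambda>e. e + b) ` EE"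
    proof
      fix x assume "x \<in> {x. x + b \<in> EE}"
      then have "x + b \<in> EE" "x = (x + b) + b" by (simp_all add: add.assoc)
      then show "x \<in> (\<lambda>e. e + b) ` EE" by blast
    qed
    show "(\<lambda>e. e + b) ` EE \<subseteq> {x. x + b \<in> EE}" by (auto simp: add.assoc)
  qed
  moreover have "inj_on (\<lambda>e. e + b) EE" by (simp add: inj_on_def)
  ultimately show ?thesis by (simp add: card_image)
qed

lemma walsh_QQ: "walsh (4*k) QQ a = int (card EE) * chi (QQ a)"
proof -
  let ?q = "2^k"
  define W where "W = walsh (4*k) QQ a"
  have W: "W = (\<Sum>x\<in>UNIV. chi (hh a x))" unfolding W_def walsh_def hh_def ..
  have shiftW: "W = (\<Sum>x\<in>UNIV. chi (hh a (x + v)))" for v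
  proof -
    have b: "bij_betw (\<lambda>x. x + v) UNIV UNIV"
      by (auto simp: bij_betw_def inj_on_def add.assoc intro!: image_eqI[where x="_ + v"])
    show ?thesis unfolding W using sum.reindex_bij_betw[OF b, of "\<lambda>x. chi (hh a x)"] by simp
  qed
  have "int (card EE) * W = (\<Sum>v\<in>EE. W)" by simp
  also have "\<dots> = (\<Sum>v\<in>EE. \<Sum>x\<in>UNIV. chi (hh a x) * chi (tr (4*k) ((x + a^?q) * v^?q)))"
  proof (intro sum.cong refl)
    fix v assume v: "v \<in> EE"
    show "W = (\<Sum>x\<in>UNIV. chi (hh a x) * chi (tr (4*k) ((x + a^?q) * v^?q)))"
      unfolding shiftW[of v] hh_shift[OF v] by (intro sum.cong refl chi_add hh_idem tr4_idem)
  qed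
  also have "\<dots> = (\<Sum>x\<in>UNIV. chi (hh a x) * (\<Sum>v\<in>EE. chi (tr (4*k) ((x + a^?q) * v^?q))))"
    by (subst sum.swap) (simp add: sum_distrib_left)
  also have "\<dots> = (\<Sum>x\<in>UNIV. if x + a^?q \<in> EE then int (card EE) * chi (QQ a) else 0)"
  proof (intro sum.cong refl)
    fix x
    show "chi (hh a x) * (\<Sum>v\<in>EE. chi (tr (4*k) ((x + a^?q) * v^?q))) =
          (if x + a^?q \<in> EE then int (card EE) * chi (QQ a) else 0)"
    proof (cases "x + a^?q \<in> EE")
      case True
      have "a^?q + (x + a^?q) = x + (a^?q + a^?q)" by (rule add.left_commute)
      then have e: "a^?q + (x + a^?q) = x" by simp
      have "hh a x = hh a (a^?q + (x + a^?q))" unfolding e ..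
      also have "\<dots> = hh a (a^?q)" unfolding hh_shift[OF True] by (simp add: tr_0)
      finally have "hh a x = QQ a" using hh_aq by simp
      then show ?thesis using True by (simp add: charsum)
    next
      case False
      then show ?thesis by (simp add: charsum)
    qed
  qed
  also have "\<dots> = int (card EE) * chi (QQ a) * int (card {x. x + a^?q \<in> EE})"
    by (simp add: sum.If_cases)
  also have "\<dots> = int (card EE) * (int (card EE) * chi (QQ a))"
    by (simp add: shift_set)
  finally show ?thesis using cardE_pos unfolding W_def by (simp add: card_gt_0_iff)
qed

end



context F4 begin

lemma G0_eq: "Gcomp k \<rho> (lambda0 k \<rho>) = QQ"
proof
  fix x show "Gcomp k \<rho> (lambda0 k \<rho>) x = QQ x"
    using part1[of "lambda0 k \<rho>" x] l0_F by (simp add: QQ_def)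
qed

lemma two_k: "(2::int)^(4*k div 2) = int (card EE)"
  using card_E by simp

lemma dual_of:
  fixes f g :: "'a \<Rightarrow> 'a"
  assumes "\<And>a. walsh (4*k) f a = int (card EE) * chi (g a)" "\<And>a. (g a)^2 = g a"
  shows "bent (4*k) f \<and> dual (4*k) f = g"
proof
  show "bent (4*k) f" unfolding bent_def
  proof
    fix a
    have "g a = 0 \<or> g a = 1" using idem01[OF assms(2)[of a]] by auto
    then show "\<bar>walsh (4*k) f a\<bar> = 2 ^ (4*k div 2)" unfolding assms(1) two_k by (auto simp: chi0 chi1)
  qed
  show "dual (4*k) f = g"
  proof
    fix a
    have "g a = 0 \<or> g a = 1" using idem01[OF assms(2)[of a]] by auto
    moreover have "int (card EE) > 0" using cardE_pos by simp
    ultimately show "dual (4*k) f a = g a" unfolding dual_def assms(1) two_k by (auto simp: chi0 chi1)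
  qed
qed

lemma QQ_bent_dual: "bent (4*k) QQ \<and> dual (4*k) QQ = QQ"
  by (rule dual_of[OF walsh_QQ QQ_idem])

lemma delta_ex1: assumes l: "l \<in> Fsub k - {0}"
  shows "\<exists>!\<delta>. \<delta> \<in> Fsub k - {0} \<and> \<delta> ^ (2^k + 1) = l * inverse (lambda0 k \<rho>)"
proof -
  let ?m = "l * inverse (lambda0 k \<rho>)"
  have mF: "?m \<in> Fsub k - {0}" using l l0_F Fsub_mult Fsub_inverse by auto
  have sq: "\<delta> ^ (2^k + 1) = \<delta>^2" if "\<delta> \<in> Fsub k" for \<delta> :: 'a
    using that by (simp add: Fsub_def pq power2_eq_square)
  define d where "d = ?m ^ (2^(k-1))"
  have "(2::nat)^(k-1) * 2 = 2^k" using k2 by (metis Suc_diff_le diff_Suc_1 le_trans one_le_numeral power_Suc2 Suc_1 le_add2 one_add_one)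
  then have "d^2 = ?m ^ (2^k)" unfolding d_def by (simp only: power_mult[symmetric])
  then have d2: "d^2 = ?m" using mF by (simp add: Fsub_def)
  have dF: "d \<in> Fsub k - {0}" using mF unfolding d_def by (auto intro: Fsub_pow)
  show ?thesis
  proof
    show "d \<in> Fsub k - {0} \<and> d ^ (2^k + 1) = ?m" using dF d2 sq by auto
  next
    fix e assume e: "e \<in> Fsub k - {0} \<and> e ^ (2^k + 1) = ?m"
    then have "e^2 = d^2" using sq d2 by auto
    then have "(e + d)^2 = 0" by (simp add: frob2)
    then show "e = d" by (simp add: add0_eq)
  qed
qed

lemma Gl_eq: assumes l: "l \<in> Fsub k - {0}" and d: "\<delta> \<in> Fsub k - {0}" "\<delta> ^ (2^k + 1) = l * inverse (lambda0 k \<rho>)"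
  shows "Gcomp k \<rho> l x = QQ (\<delta> * x)"
proof -
  have l0: "lambda0 k \<rho> \<noteq> 0" using l0_F by simp
  have g: "\<And>L w X. L \<noteq> 0 \<Longrightarrow> L * w * (l * inverse L * X) = l * w * (X::'a)"
    by (simp add: field_simps)
  have "cc * (\<delta> * x) ^ (2^k + 1) = cc * (\<delta> ^ (2^k + 1) * x ^ (2^k + 1))"
    by (simp only: power_mult_distrib)
  also have "\<dots> = lambda0 k \<rho> * omega k \<rho> * (l * inverse (lambda0 k \<rho>) * x ^ (2^k + 1))"
    by (simp only: d(2))
  also have "\<dots> = l * omega k \<rho> * x ^ (2^k + 1)" by (rule g[OF l0])
  finally have "cc * (\<delta> * x) ^ (2^k + 1) = l * omega k \<rho> * x ^ (2^k + 1)" .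
  then have q: "QQ (\<delta>*x) = tr (4*k) (l * omega k \<rho> * x^(2^k+1))" by (simp only: QQ_def)
  have p: "Gcomp k \<rho> l x = tr (4*k) (l * omega k \<rho> * x^(2^k+1))" using l by (intro part1) auto
  show ?thesis unfolding p q ..
qed

lemma walsh_Gl: assumes l: "l \<in> Fsub k - {0}" and d: "\<delta> \<in> Fsub k - {0}" "\<delta> ^ (2^k + 1) = l * inverse (lambda0 k \<rho>)"
  shows "walsh (4*k) (Gcomp k \<rho> l) a = int (card EE) * chi (QQ (inverse \<delta> * a))"
proof -
  have d0: "\<delta> \<noteq> 0" using d by simp
  let ?F = "\<lambda>y. chi (QQ y + tr (4*k) (a * inverse \<delta> * y))"
  have b: "bij_betw (\<lambda>x. \<delta> * x) UNIV UNIV"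
    by (rule bij_betw_byWitness[where f'="\<lambda>x. inverse \<delta> * x"]) (use d0 in auto)
  have "walsh (4*k) (Gcomp k \<rho> l) a = (\<Sum>x\<in>UNIV. ?F (\<delta> * x))"
    unfolding walsh_def Gl_eq[OF l d] using d0 by (intro sum.cong refl) (simp add: field_simps)
  also have "\<dots> = (\<Sum>y\<in>UNIV. ?F y)" by (rule sum.reindex_bij_betw[OF b])
  also have "\<dots> = walsh (4*k) QQ (a * inverse \<delta>)" unfolding walsh_def ..
  finally show ?thesis unfolding walsh_QQ by (simp add: mult.commute)
qed

lemma Gl_bent_dual: assumes l: "l \<in> Fsub k - {0}" and d: "\<delta> \<in> Fsub k - {0}" "\<delta> ^ (2^k + 1) = l * inverse (lambda0 k \<rho>)"
  shows "bent (4*k) (Gcomp k \<rho> l) \<and> dual (4*k) (Gcomp k \<rho> l) = (\<lambda>x. QQ (inverse \<delta> * x))"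
  by (rule dual_of[OF walsh_Gl[OF l d] QQ_idem])

lemma D2_quad: fixes a b C x :: 'a assumes ab: "a * b^(2^k) + a^(2^k) * b = 0"
  shows "D2 a b (\<lambda>x. tr (4*k) (C * x^(2^k + 1))) x = 0"
proof -
  let ?q = "2^k"
  have key: "\<And>X A B (x::'a) a b. X*x + (X+A)*(x+a) + (X+B)*(x+b) + (X+A+B)*(x+a+b)
     = (A*b + B*a) + 2*(2*X*x + X*a + A*x + A*a + X*b + B*x + B*b)"
    by algebra
  have "x^(?q+1) + (x+a)^(?q+1) + (x+b)^(?q+1) + (x+a+b)^(?q+1) =
        x^?q*x + (x^?q+a^?q)*(x+a) + (x^?q+b^?q)*(x+b) + (x^?q+a^?q+b^?q)*(x+a+b)"
    by (simp only: pq frob)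
  also have "\<dots> = (a^?q*b + b^?q*a) + 2*(2*x^?q*x + x^?q*a + a^?q*x + a^?q*a + x^?q*b + b^?q*x + b^?q*b)"
    by (rule key)
  also have "a^?q*b + b^?q*a = a * b^?q + a^?q * b" by (simp add: ac_simps)
  also have "\<dots> = 0" by (rule ab)
  also have "0 + 2*(2*x^?q*x + x^?q*a + a^?q*x + a^?q*a + x^?q*b + b^?q*x + b^?q*b) = 0" using two0 by simp
  finally have s0: "x^(?q+1) + (x+a)^(?q+1) + (x+b)^(?q+1) + (x+a+b)^(?q+1) = 0" .
  have "D2 a b (\<lambda>x. tr (4*k) (C * x^(?q + 1))) x =
        tr (4*k) (C * (x^(?q+1) + (x+a)^(?q+1) + (x+b)^(?q+1) + (x+a+b)^(?q+1)))"
    unfolding D2_def by (simp only: distrib_left tr_add)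
  then show ?thesis unfolding s0 by (simp add: tr_0)
qed

lemma ab_cond: assumes "a \<in> EE" "b \<in> EE" "a * b^(2^k) \<in> Fsub k"
  shows "a * b^(2^k) + a^(2^k) * b = 0"
proof -
  have "k + k = 2*k" by simp
  then have bq: "(b^(2^k))^(2^k) = b" using assms(2) by (simp only: pow2_add[symmetric]) (simp add: Fsub_def)
  have "(a * b^(2^k))^(2^k) = a * b^(2^k)" using assms(3) by (simp add: Fsub_def)
  then have "a^(2^k) * b = a * b^(2^k)" using bq by (simp add: power_mult_distrib)
  then show ?thesis by simp
qed

lemma QQ_scaled: "(\<lambda>x. QQ (d * x)) = (\<lambda>x. tr (4*k) ((cc * d^(2^k+1)) * x^(2^k + 1)))"
  by (simp add: QQ_def power_mult_distrib ac_simps)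

end




theorem lemma4:
  fixes k :: nat and \<rho> :: "'a::{field,finite}"
  assumes "k \<ge> 2" and "card (UNIV :: 'a set) = 2 ^ (4 * k)" and "primitive \<rho>"
  shows "(\<forall>l \<in> Fsub k - {0}. \<forall>x. Gcomp k \<rho> l x = tr (4 * k) (l * omega k \<rho> * x ^ (2 ^ k + 1)))
       \<and> lambda0 k \<rho> \<in> Fsub k - {0}
       \<and> tr k (lambda0 k \<rho>) = 1
       \<and> bent (4 * k) (Gcomp k \<rho> (lambda0 k \<rho>))
       \<and> dual (4 * k) (Gcomp k \<rho> (lambda0 k \<rho>)) = Gcomp k \<rho> (lambda0 k \<rho>)
       \<and> (\<forall>l \<in> Fsub k - {0}.
            bent (4 * k) (Gcomp k \<rho> l)
          \<and> (\<exists>!\<delta>. \<delta> \<in> Fsub k - {0} \<and> \<delta> ^ (2 ^ k + 1) = l * inverse (lambda0 k \<rho>))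
          \<and> (\<forall>\<delta> \<in> Fsub k - {0}. \<delta> ^ (2 ^ k + 1) = l * inverse (lambda0 k \<rho>) \<longrightarrow>
                 dual (4 * k) (Gcomp k \<rho> l) = (\<lambda>x. Gcomp k \<rho> (lambda0 k \<rho>) (inverse \<delta> * x))))
       \<and> (\<forall>a b l. a \<in> Fsub (2 * k) - {0} \<longrightarrow> b \<in> Fsub (2 * k) - {0} \<longrightarrow>
            a * b ^ (2 ^ k) \<in> Fsub k \<longrightarrow> l \<in> Fsub k - {0} \<longrightarrow> tr k l = 1 \<longrightarrow>
            (\<forall>x. D2 a b (dual (4 * k) (Gcomp k \<rho> l)) x = 0))"
proof -
  interpret F4 k \<rho> using assms by unfold_locales
  have c1: "\<forall>l \<in> Fsub k - {0}. \<forall>x. Gcomp k \<rho> l x = tr (4 * k) (l * omega k \<rho> * x ^ (2 ^ k + 1))"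
    using part1 by auto
  have c6: "\<forall>l \<in> Fsub k - {0}.
            bent (4 * k) (Gcomp k \<rho> l)
          \<and> (\<exists>!\<delta>. \<delta> \<in> Fsub k - {0} \<and> \<delta> ^ (2 ^ k + 1) = l * inverse (lambda0 k \<rho>))
          \<and> (\<forall>\<delta> \<in> Fsub k - {0}. \<delta> ^ (2 ^ k + 1) = l * inverse (lambda0 k \<rho>) \<longrightarrow>
                 dual (4 * k) (Gcomp k \<rho> l) = (\<lambda>x. Gcomp k \<rho> (lambda0 k \<rho>) (inverse \<delta> * x)))"
  proof
    fix l :: 'a assume l: "l \<in> Fsub k - {0}"
    obtain d where d: "d \<in> Fsub k - {0}" "d ^ (2 ^ k + 1) = l * inverse (lambda0 k \<rho>)"
      using delta_ex1[OF l] by auto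
    show "bent (4 * k) (Gcomp k \<rho> l)
          \<and> (\<exists>!\<delta>. \<delta> \<in> Fsub k - {0} \<and> \<delta> ^ (2 ^ k + 1) = l * inverse (lambda0 k \<rho>))
          \<and> (\<forall>\<delta> \<in> Fsub k - {0}. \<delta> ^ (2 ^ k + 1) = l * inverse (lambda0 k \<rho>) \<longrightarrow>
                 dual (4 * k) (Gcomp k \<rho> l) = (\<lambda>x. Gcomp k \<rho> (lambda0 k \<rho>) (inverse \<delta> * x)))"
      using Gl_bent_dual[OF l d] Gl_bent_dual[OF l] delta_ex1[OF l] G0_eq by auto
  qed
  have c7: "\<forall>a b l. a \<in> Fsub (2 * k) - {0} \<longrightarrow> b \<in> Fsub (2 * k) - {0} \<longrightarrow>
            a * b ^ (2 ^ k) \<in> Fsub k \<longrightarrow> l \<in> Fsub k - {0} \<longrightarrow> tr k l = 1 \<longrightarrow>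
            (\<forall>x. D2 a b (dual (4 * k) (Gcomp k \<rho> l)) x = 0)"
  proof (intro allI impI)
    fix a b l x :: 'a
    assume a: "a \<in> Fsub (2 * k) - {0}" and b: "b \<in> Fsub (2 * k) - {0}"
      and ab: "a * b ^ (2 ^ k) \<in> Fsub k" and l: "l \<in> Fsub k - {0}"
    obtain d where d: "d \<in> Fsub k - {0}" "d ^ (2 ^ k + 1) = l * inverse (lambda0 k \<rho>)"
      using delta_ex1[OF l] by auto
    have "dual (4 * k) (Gcomp k \<rho> l) = (\<lambda>x. QQ (inverse d * x))"
      using Gl_bent_dual[OF l d] by auto
    also have "\<dots> = (\<lambda>x. tr (4*k) ((cc * (inverse d)^(2^k+1)) * x^(2^k + 1)))"
      by (rule QQ_scaled)
    finally have du: "dual (4 * k) (Gcomp k \<rho> l) = (\<lambda>x. tr (4*k) ((cc * (inverse d)^(2^k+1)) * x^(2^k + 1)))" .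
    have abz: "a * b^(2^k) + a^(2^k) * b = 0" using a b ab by (intro ab_cond) auto
    show "D2 a b (dual (4 * k) (Gcomp k \<rho> l)) x = 0"
      unfolding du by (rule D2_quad[OF abz])
  qed
  show ?thesis
    using c1 c6 c7 l0_F l0_tr QQ_bent_dual G0_eq by simp
qed


end
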